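(* For every trie $\mathcal T$ with $n$ nodes and every integer $k\ge0$, $n\mathcal H_k(\mathcal T)\le (n-1)\mathcal H^{label}_k(\mathcal T)+1.443n$.
   Context: A trie over a finite totally ordered alphabet $\Sigma$ is a rooted ordered tree with edges labeled by symbols of $\Sigma$ such that edges leaving the same node have distinct labels and siblings are ordered by their incoming labels. For node $u$: $out(u)$ is the set of labels of edges leaving $u$; $\lambda(u)$ is the label of the edge entering $u$, with $\lambda(\text{root})=\#\notin\Sigma$; $\pi(u)$ is the parent, $\pi(\text{root})=\text{root}$; $\lambda_0(u)=\epsilon$, $\lambda_k(u)=\lambda_{k-1}(\pi(u))\cdot\lambda(u)$. For a length-$k$ string $w$ and $c\in\Sigma$: $n_w=|\{u:\lambda_k(u)=w\}|$, $n_{w,c}=|\{u:\lambda_k(u)=w,\ c\in out(u)\}|$. Logs base 2, $0\log(x/0)=0$. $\mathcal H_k(\mathcal T)=\sum_{w}\sum_{c\in\Sigma}\left[\frac{n_{w,c}}{n}\log\frac{n_w}{n_{w,c}}+\frac{n_w-n_{w,c}}{n}\log\frac{n_w}{n_w-n_{w,c}}\right]$ over contexts $w$ with $n_w>0$. For a string $X$ of length $\ell>0$ with $\ell_c$ occurrences of $c$, $\mathcal H_0(X)=\sum_c\frac{\ell_c}{\ell}\log\frac{\ell}{\ell_c}$ (and $0$ for the empty string). For a length-$k$ context $w$, $cover(w)$ is the string obtained by concatenating (in any order) the labels of all edges leaving nodes $u$ with $\lambda_k(u)=w$. The label entropy is defined by $(n-1)\mathcal H^{label}_k(\mathcal T)=\sum_w|cover(w)|\,\mathcal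 H_0(cover(w))$. *)

theory Defs
  imports Complex_Main "HOL-Library.Multiset"
begin

text \<open>A trie over alphabet Sig is represented by the finite, prefix-closed set of its
nodes, each node being identified with the string of edge labels on the path from the root
(the root is the empty list). Sibling order is induced by the order on the alphabet and plays
no role in the entropies.\<close>

definition is_trie :: "'a::linorder set \<Rightarrow> 'a list set \<Rightarrow> bool" where
  "is_trie Sig T \<longleftrightarrow> finite Sig \<and> finite T \<and> [] \<in> T \<and>
     (\<forall>u\<in>T. butlast u \<in> T) \<and> (\<forall>u\<in>T. set u \<subseteq> Sig)"

text \<open>Incoming label: None plays the role of the special symbol # (root).\<close>
definition lam :: "'a list \<Rightarrow> 'a option" where
  "lam u = (if u = [] then None else Some (last u))"

text \<open>Parent: butlast (the parent of the root is the root). Length-k context lambda_k.\<close>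
fun ctx :: "nat \<Rightarrow> 'a list \<Rightarrow> 'a option list" where
  "ctx 0 u = []"
| "ctx (Suc k) u = ctx k (butlast u) @ [lam u]"

definition out :: "'a list set \<Rightarrow> 'a list \<Rightarrow> 'a set" where
  "out T u = {c. u @ [c] \<in> T}"

definition n_w :: "'a list set \<Rightarrow> nat \<Rightarrow> 'a option list \<Rightarrow> nat" where
  "n_w T k w = card {u \<in> T. ctx k u = w}"

definition n_wc :: "'a list set \<Rightarrow> nat \<Rightarrow> 'a option list \<Rightarrow> 'a \<Rightarrow> nat" where
  "n_wc T k w c = card {u \<in> T. ctx k u = w \<and> c \<in> out T u}"

definition xlog :: "real \<Rightarrow> real \<Rightarrow> real" where
  "xlog x y = (if x = 0 then 0 else x * log 2 (y / x))"

definition Hk :: "'a set \<Rightarrow> 'a list set \<Rightarrow> nat \<Rightarrow> real" where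
  "Hk Sig T k = (\<Sum>w\<in>ctx k ` T. \<Sum>c\<in>Sig.
      xlog (n_wc T k w c / card T) (n_w T k w / card T)
    + xlog ((real (n_w T k w) - n_wc T k w c) / card T) (n_w T k w / card T))"

text \<open>Empirical zeroth-order entropy of a string, given as the multiset of its letters.\<close>
definition H0 :: "'a multiset \<Rightarrow> real" where
  "H0 X = (if size X = 0 then 0 else
     (\<Sum>c\<in>set_mset X. (count X c / size X) * log 2 (size X / count X c)))"

text \<open>cover(w): the labels of all edges leaving nodes with context w (order irrelevant).\<close>
definition cover :: "'a list set \<Rightarrow> nat \<Rightarrow> 'a option list \<Rightarrow> 'a multiset" where
  "cover T k w = (\<Sum>u\<in>{u \<in> T. ctx k u = w}. mset_set (out T u))"

text \<open>(n-1) * H^label_k(T), as defined in the paper.\<close>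
definition nm1_Hlabel :: "'a list set \<Rightarrow> nat \<Rightarrow> real" where
  "nm1_Hlabel T k = (\<Sum>w\<in>ctx k ` T. real (size (cover T k w)) * H0 (cover T k w))"

end

theory Submission
  imports Defs
begin

lemma ln2_bound: "ln 2 > (0.6930007::real)"
proof -
  define g where "g n = (1/2::real)^(Suc n) / real (n+1)" for n
  have sg: "summable g"
  proof (rule summable_comparison_test'[of "\<lambda>n. (1/2::real)^n" 0])
    show "summable (\<lambda>n. (1/2::real)^n)" by (rule summable_geometric) simp
    fix n :: nat
    have "g n \<le> (1/2)^(Suc n)" unfolding g_def by (simp add: divide_le_eq)
    also have "\<dots> \<le> (1/2)^n" by simp
    finally show "norm (g n) \<le> (1/2)^n" unfolding g_def by simp
  qed
  have "ln (1/2::real) = (\<Sum>n. (-1)^n * (1 / real (n + 1)) * (1/2 - 1)^(Suc n))"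
    by (rule ln_series) auto
  also have "(\<lambda>n. (-1)^n * (1 / real (n + 1)) * (1/2 - 1::real)^(Suc n)) = (\<lambda>n. - g n)"
  proof
    fix n
    have "(1/2 - 1::real)^(Suc n) = (-1)^(Suc n) * (1/2)^(Suc n)"
      by (subst power_mult_distrib[symmetric]) simp
    then show "(-1)^n * (1 / real (n + 1)) * (1/2 - 1::real)^(Suc n) = - g n"
      unfolding g_def by (simp add: power_add[symmetric] mult_ac)
  qed
  also have "(\<Sum>n. - g n) = - suminf g" using sg by (rule suminf_minus)
  finally have "ln 2 = suminf g" by (simp add: ln_div)
  moreover have "sum g {..<10} \<le> suminf g"
    by (rule sum_le_suminf[OF sg]) (auto simp: g_def)
  moreover have "sum g {..<10} > 0.6930007"
    by (simp add: g_def lessThan_Suc numeral_eq_Suc)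
  ultimately show ?thesis by linarith
qed

lemma xlog_scale:
  assumes "(n::real) > 0"
  shows "n * xlog (a / n) (b / n) = xlog a b"
  using assms unfolding xlog_def by auto

lemma xlog_compl:
  assumes "0 \<le> m" "m \<le> (N::real)"
  shows "xlog (N - m) N \<le> m / ln 2"
proof (cases "N - m = 0")
  case True then show ?thesis using assms by (simp add: xlog_def)
next
  case False
  then have p: "N - m > 0" using assms by simp
  have "ln (N / (N - m)) \<le> N / (N - m) - 1"
    by (rule ln_le_minus_one) (use p assms in simp)
  then have "(N - m) * ln (N / (N - m)) \<le> (N - m) * (N / (N - m) - 1)"
    using p by (simp add: mult_left_mono)
  also have "\<dots> = m" using p by (simp add: field_simps)
  finally have "(N - m) * ln (N / (N - m)) \<le> m" .
  then show ?thesis using False unfolding xlog_def log_def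
    by (simp add: divide_right_mono)
qed

lemma perw:
  fixes X :: "'a multiset" and Sig :: "'a set" and N :: real
  assumes fin: "finite Sig" and sub: "set_mset X \<subseteq> Sig" and Np: "N > 0"
    and le: "\<And>c. real (count X c) \<le> N"
  shows "(\<Sum>c\<in>Sig. xlog (count X c) N + xlog (N - count X c) N)
     \<le> real (size X) * H0 X + N / ln 2"
proof -
  define L where "L = real (size X)"
  have sizeeq: "size X = (\<Sum>c\<in>Sig. count X c)"
    by (subst size_multiset_overloaded_eq, rule sum.mono_neutral_left) (use fin sub in \<open>auto simp: not_in_iff\<close>)
  have LH: "real (size X) * H0 X = (\<Sum>c\<in>Sig. xlog (count X c) L)"
  proof (cases "size X = 0")
    case True then show ?thesis by (simp add: H0_def xlog_def L_def)
  next
    case False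
    have "real (size X) * H0 X = (\<Sum>c\<in>set_mset X. xlog (count X c) L)"
      using False unfolding H0_def L_def xlog_def by (auto simp: sum_distrib_left intro!: sum.cong)
    also have "\<dots> = (\<Sum>c\<in>Sig. xlog (count X c) L)"
      by (rule sum.mono_neutral_left) (use fin sub in \<open>auto simp: xlog_def\<close>)
    finally show ?thesis .
  qed
  have c1: "(\<Sum>c\<in>Sig. xlog (count X c) N) \<le> (\<Sum>c\<in>Sig. xlog (count X c) L) + (N - L) / ln 2"
  proof (cases "size X = 0")
    case True
    then have "X = {#}" by simp
    then show ?thesis using Np True by (simp add: xlog_def L_def)
  next
    case False
    then have Lp: "L > 0" by (simp add: L_def nonempty_has_size)
    have "xlog (count X c) N = xlog (count X c) L + count X c * log 2 (N / L)" for c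
    proof (cases "count X c = 0")
      case False
      then have "log 2 (N / count X c) = log 2 (L / count X c) + log 2 (N / L)"
        using Lp Np by (simp add: log_divide)
      then show ?thesis using False by (simp add: xlog_def algebra_simps)
    qed (simp add: xlog_def)
    then have "(\<Sum>c\<in>Sig. xlog (count X c) N) = (\<Sum>c\<in>Sig. xlog (count X c) L) + L * log 2 (N / L)"
      by (simp add: sum.distrib sum_distrib_right[symmetric] sizeeq L_def)
    moreover have "L * log 2 (N / L) \<le> (N - L) / ln 2"
    proof -
      have "ln (N / L) \<le> N / L - 1" by (rule ln_le_minus_one) (use Lp Np in simp)
      then have "L * ln (N / L) \<le> L * (N / L - 1)" using Lp by (simp add: mult_left_mono)
      also have "\<dots> = N - L" using Lp by (simp add: field_simps)
      finally show ?thesis unfolding log_def by (simp add: divide_right_mono)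
    qed
    ultimately show ?thesis by simp
  qed
  have c2: "(\<Sum>c\<in>Sig. xlog (N - count X c) N) \<le> (\<Sum>c\<in>Sig. count X c / ln 2)"
    by (rule sum_mono, rule xlog_compl) (use le in auto)
  also have "\<dots> = L / ln 2" by (simp add: L_def sizeeq sum_divide_distrib)
  finally show ?thesis using c1 LH by (simp add: sum.distrib diff_divide_distrib)
qed

lemma main_aux:
  fixes Sig :: "'a::linorder set" and T :: "'a list set" and k :: nat
  assumes "is_trie Sig T"
  shows "real (card T) * Hk Sig T k \<le> nm1_Hlabel T k + real (card T) / ln 2"
proof -
  have finS: "finite Sig" and finT: "finite T" and root: "[] \<in> T"
    and sig: "\<And>u. u \<in> T \<Longrightarrow> set u \<subseteq> Sig"
    using assms unfolding is_trie_def by auto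
  define n where "n = real (card T)"
  have np: "n > 0" using finT root by (auto simp: n_def card_gt_0_iff)
  define W where "W = ctx k ` T"
  have finW: "finite W" using finT by (simp add: W_def)
  have outS: "out T u \<subseteq> Sig" for u
    using sig unfolding out_def by fastforce
  have finout: "finite (out T u)" for u using outS finS by (rule finite_subset)
  have cnt: "count (cover T k w) c = n_wc T k w c" for w c
  proof -
    have "count (cover T k w) c = (\<Sum>u\<in>{u \<in> T. ctx k u = w}. if c \<in> out T u then 1 else 0)"
      unfolding cover_def by (auto simp: count_sum finout count_mset_set intro!: sum.cong)
    also have "\<dots> = card {u \<in> {u \<in> T. ctx k u = w}. c \<in> out T u}"
      by (simp add: sum.If_cases finT Collect_conj_eq[symmetric] conj_assoc)
    also have "\<dots> = n_wc T k w c" unfolding n_wc_def by (simp add: Int_def conj_assoc)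
    finally show ?thesis .
  qed
  have subc: "set_mset (cover T k w) \<subseteq> Sig" for w
  proof
    fix c assume "c \<in># cover T k w"
    then have "count (cover T k w) c > 0" by simp
    then have "{u \<in> T. ctx k u = w \<and> c \<in> out T u} \<noteq> {}" unfolding cnt n_wc_def by (metis card.empty less_irrefl)
    then show "c \<in> Sig" using outS by auto
  qed
  have lecnt: "real (count (cover T k w) c) \<le> real (n_w T k w)" for w c
    unfolding cnt n_wc_def n_w_def of_nat_le_iff by (rule card_mono) (use finT in auto)
  have Npos: "real (n_w T k w) > 0" if "w \<in> W" for w
    using that finT unfolding W_def n_w_def by (auto simp: card_gt_0_iff)
  have "n * Hk Sig T k = (\<Sum>w\<in>W. \<Sum>c\<in>Sig.
      xlog (count (cover T k w) c) (n_w T k w) + xlog (real (n_w T k w) - count (cover T k w) c) (n_w T k w))"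
    unfolding Hk_def W_def[symmetric] n_def[symmetric]
    by (simp add: sum_distrib_left distrib_left xlog_scale[OF np] cnt diff_divide_distrib[symmetric])
  also have "\<dots> \<le> (\<Sum>w\<in>W. real (size (cover T k w)) * H0 (cover T k w) + real (n_w T k w) / ln 2)"
    by (rule sum_mono, rule perw[OF finS subc Npos lecnt])
  also have "\<dots> = nm1_Hlabel T k + (\<Sum>w\<in>W. real (n_w T k w)) / ln 2"
    unfolding nm1_Hlabel_def W_def by (simp add: sum.distrib sum_divide_distrib)
  also have "(\<Sum>w\<in>W. real (n_w T k w)) = n"
  proof -
    have "T = (\<Union>w\<in>W. {u \<in> T. ctx k u = w})" unfolding W_def by auto
    moreover have "card (\<Union>w\<in>W. {u \<in> T. ctx k u = w}) = (\<Sum>w\<in>W. card {u \<in> T. ctx k u = w})"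
      by (rule card_UN_disjoint) (use finW finT in auto)
    ultimately have "card T = (\<Sum>w\<in>W. card {u \<in> T. ctx k u = w})" by simp
    then show ?thesis unfolding n_def n_w_def by simp
  qed
  finally show ?thesis unfolding n_def .
qed

theorem corollary3:
  fixes Sig :: "'a::linorder set" and T :: "'a list set" and k :: nat
  assumes "is_trie Sig T"
  shows "real (card T) * Hk Sig T k \<le> nm1_Hlabel T k + 1.443 * real (card T)"
proof -
  have l2: "ln (2::real) > 0.6930007" by (rule ln2_bound)
  have "real (card T) / ln 2 \<le> 1.443 * real (card T)"
  proof -
    have "real (card T) \<le> 1.443 * real (card T) * ln 2"
    proof -
      have "real (card T) * 1 \<le> real (card T) * (1.443 * ln 2)"
        by (rule mult_left_mono) (use l2 in auto)
      then show ?thesis by (simp add: mult_ac)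
    qed
    then show ?thesis using l2 by (simp add: divide_le_eq)
  qed
  then show ?thesis using main_aux[OF assms, where k=k] by linarith
qed

end
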